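(* Let $\phi$ be an MTL sentence over the alphabet $\mathcal F^0$ of nullary fluent predicates. Let $\tau=(p_1,t_1)(p_2,t_2)\cdots$ be a finite or infinite timed trace; for each $i$ let $z^{(i)}$ be the prefix of $\tau$ consisting of the first $i$ time–action pairs and $\tau^{(i)}$ the suffix with $\tau=z^{(i)}\cdot\tau^{(i)}$. Let $w$ be a t-ESG world and $\rho$ the timed word corresponding to $(w,\tau)$. Then for each $i\in\mathbb N_0$ (with $i\le|\tau|$): $$w,z^{(i)},\tau^{(i)}\models_{\text{t-ESG}}\phi \iff \rho,i\models_{\mathrm{MTL}}\phi .$$
   Context: The logic t-ESG (relevant fragment). Action standard names $\mathcal N_A$; fluent predicate symbols, in particular nullary ones $\mathcal F^0$; primitive formulas are predicate symbols applied to standard names. Timed traces are finite or infinite sequences $t_1p_1t_2p_2\cdots$ with non-decreasing $t_i\in\mathbb R_{\ge0}$ and $p_i\in\mathcal N_A$; $(p_1,t_1)\cdots(p_k,t_k)$ denotes $t_1p_1\cdots t_kp_k$; $\mathrm{time}(z)=t_k$ for such $z$ and $\mathrm{time}(\langle\rangle)=0$. A world $w$ assigns to each primitive formula and each finite trace $z$ a truth value $w[F(\vec n),z]\in\{0,1\}$ (plus values of terms and clocks, irrelevant here). Trace formulas over $\mathcal F^0$: atoms $F\in\mathcal F^0$, $\neg\phi$, $\phi\wedge\psi$, $\phi\,\mathcal U_I\,\psi$ with $I$ an open/closed/half-closed interval with natural-number (or $\infty$) endpoints. Truth for finite $z$ and (finite or infinite) $\tau$: $w,z,\tau\models F$ iff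 $w[F,z]=1$; Boolean connectives as usual; $w,z,\tau\models\phi\,\mathcal U_I\,\psi$ iff there are a trace $\tau'$ and a nonempty finite $z_1=(p_1,t_1)\cdots(p_k,t_k)$ with $\tau=z_1\tau'$, $w,zz_1,\tau'\models\psi$, $\mathrm{time}(z_1)\in\mathrm{time}(z)+I$, and for all splits $z_1=z_2z_3$ with $z_2,z_3$ nonempty sequences of time–action pairs, $w,zz_2,z_3\tau'\models\phi$. MTL (pointwise semantics): formulas over a set $P$ of propositions: $p\in P$, $\neg\phi$, $\phi\wedge\psi$, $\phi\,\mathcal U_I\,\psi$. A timed word is a finite or infinite sequence $\rho=(\rho_0,t_0)(\rho_1,t_1)\cdots$ with $\rho_i\subseteq P$, $t_0=0$, non-decreasing $t_i\in\mathbb R_{\ge0}$. $\rho,i\models p$ iff $p\in\rho_i$; Boolean connectives usual; $\rho,i\models\phi\,\mathcal U_I\,\psi$ iff there is $j$ with $i<j<|\rho|$, $\rho,j\models\psi$, $t_j-t_i\in I$, and $\rho,m\models\phi$ for all $i<m<j$. Timed word corresponding to $(w,\tau)$: $\rho=(\rho_0,0)(\rho_1,t_1)(\rho_2,t_2)\cdots$ (same length as $\tau$ plus one) with $\rho_i=\{F(\vec n)\text{ primitive formula}\mid w[F(\vec n),z^{(i)}]=1\}$, where $z^{(i)}$ is the prefix of $\tau$ with $i$ time–action pairs. *)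

theory Defs
  imports Main "HOL-Library.Extended_Nat"
begin

datatype 'e seq = Fin "'e list" | Inf "nat \<Rightarrow> 'e"

fun slen :: "'e seq \<Rightarrow> enat" where
  "slen (Fin l) = enat (length l)"
| "slen (Inf f) = \<infinity>"

fun snth :: "'e seq \<Rightarrow> nat \<Rightarrow> 'e" where
  "snth (Fin l) i = l ! i"
| "snth (Inf f) i = f i"

fun sappend :: "'e list \<Rightarrow> 'e seq \<Rightarrow> 'e seq" where
  "sappend z (Fin l) = Fin (z @ l)"
| "sappend z (Inf f) = Inf (\<lambda>n. if n < length z then z ! n else f (n - length z))"

definition sprefix :: "'e seq \<Rightarrow> nat \<Rightarrow> 'e list" where
  "sprefix s i = map (snth s) [0..<i]"

fun sdrop :: "nat \<Rightarrow> 'e seq \<Rightarrow> 'e seq" where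
  "sdrop i (Fin l) = Fin (drop i l)"
| "sdrop i (Inf f) = Inf (\<lambda>n. f (n + i))"

type_synonym 'a ttrace = "('a \<times> real) seq"

definition valid_ttrace :: "'a ttrace \<Rightarrow> bool" where
  "valid_ttrace \<tau> \<longleftrightarrow>
     (\<forall>i. enat i < slen \<tau> \<longrightarrow> 0 \<le> snd (snth \<tau> i)) \<and>
     (\<forall>i. enat (Suc i) < slen \<tau> \<longrightarrow> snd (snth \<tau> i) \<le> snd (snth \<tau> (Suc i)))"

definition ttime :: "('a \<times> real) list \<Rightarrow> real" where
  "ttime z = (if z = [] then 0 else snd (last z))"

text \<open>lower endpoint, lower closed?, upper endpoint (possibly \<infinity>), upper closed?\<close>
datatype interval = Ivl nat bool enat bool

fun in_ivl :: "real \<Rightarrow> interval \<Rightarrow> bool" where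
  "in_ivl d (Ivl l lc u uc) \<longleftrightarrow>
     (if lc then real l \<le> d else real l < d) \<and>
     (case u of \<infinity> \<Rightarrow> True | enat n \<Rightarrow> (if uc then d \<le> real n else d < real n))"

datatype 'f fml = Atom 'f | Neg "'f fml" | And "'f fml" "'f fml"
  | Until "'f fml" interval "'f fml"

text \<open>A t-ESG world (restricted to fluent truth values): primitive formulas are
  predicate symbols applied to lists of standard names; a nullary fluent F is (F, []).\<close>
type_synonym ('f, 'n, 'a) world = "('f \<times> 'n list) \<Rightarrow> ('a \<times> real) list \<Rightarrow> bool"

fun esg_sat :: "('f, 'n, 'a) world \<Rightarrow> ('a \<times> real) list \<Rightarrow> 'a ttrace \<Rightarrow> 'f fml \<Rightarrow> bool" where
  "esg_sat w z \<tau> (Atom F) \<longleftrightarrow> w (F, []) z"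
| "esg_sat w z \<tau> (Neg \<phi>) \<longleftrightarrow> \<not> esg_sat w z \<tau> \<phi>"
| "esg_sat w z \<tau> (And \<phi> \<psi>) \<longleftrightarrow> esg_sat w z \<tau> \<phi> \<and> esg_sat w z \<tau> \<psi>"
| "esg_sat w z \<tau> (Until \<phi> I \<psi>) \<longleftrightarrow>
     (\<exists>\<tau>' z1. z1 \<noteq> [] \<and> \<tau> = sappend z1 \<tau>' \<and> esg_sat w (z @ z1) \<tau>' \<psi> \<and>
        in_ivl (ttime z1 - ttime z) I \<and>
        (\<forall>z2 z3. z1 = z2 @ z3 \<and> z2 \<noteq> [] \<and> z3 \<noteq> [] \<longrightarrow>
            esg_sat w (z @ z2) (sappend z3 \<tau>') \<phi>))"

type_synonym 'p tword = "('p set \<times> real) seq"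

fun mtl_sat :: "'p tword \<Rightarrow> nat \<Rightarrow> 'p fml \<Rightarrow> bool" where
  "mtl_sat \<rho> i (Atom p) \<longleftrightarrow> p \<in> fst (snth \<rho> i)"
| "mtl_sat \<rho> i (Neg \<phi>) \<longleftrightarrow> \<not> mtl_sat \<rho> i \<phi>"
| "mtl_sat \<rho> i (And \<phi> \<psi>) \<longleftrightarrow> mtl_sat \<rho> i \<phi> \<and> mtl_sat \<rho> i \<psi>"
| "mtl_sat \<rho> i (Until \<phi> I \<psi>) \<longleftrightarrow>
     (\<exists>j. i < j \<and> enat j < slen \<rho> \<and> mtl_sat \<rho> j \<psi> \<and>
        in_ivl (snd (snth \<rho> j) - snd (snth \<rho> i)) I \<and>
        (\<forall>m. i < m \<and> m < j \<longrightarrow> mtl_sat \<rho> m \<phi>))"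

definition corr_letter :: "('f, 'n, 'a) world \<Rightarrow> 'a ttrace \<Rightarrow> nat \<Rightarrow> ('f \<times> 'n list) set \<times> real" where
  "corr_letter w \<tau> i = ({P. w P (sprefix \<tau> i)}, ttime (sprefix \<tau> i))"

fun corr_word :: "('f, 'n, 'a) world \<Rightarrow> 'a ttrace \<Rightarrow> ('f \<times> 'n list) tword" where
  "corr_word w (Fin l) = Fin (map (corr_letter w (Fin l)) [0..<Suc (length l)])"
| "corr_word w (Inf f) = Inf (corr_letter w (Inf f))"

definition nullary :: "'f fml \<Rightarrow> ('f \<times> 'n list) fml" where
  "nullary \<phi> = map_fml (\<lambda>F. (F, [])) \<phi>"

end

theory Submission
  imports Defs
begin

definition seg :: "'e seq \<Rightarrow> nat \<Rightarrow> nat \<Rightarrow> 'e list" where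
  "seg s i k = map (\<lambda>n. snth s (i+n)) [0..<k]"

lemma seg_Fin: "i + k \<le> length l \<Longrightarrow> seg (Fin l) i k = take k (drop i l)"
  by (simp add: seg_def list_eq_iff_nth_eq)

lemma sdrop_split: "enat (i+k) \<le> slen \<tau> \<Longrightarrow> sdrop i \<tau> = sappend (seg \<tau> i k) (sdrop (i+k) \<tau>)"
proof (cases \<tau>)
  case (Fin l)
  assume "enat (i+k) \<le> slen \<tau>"
  then have "i + k \<le> length l" using Fin by simp
  then have s: "seg (Fin l) i k = take k (drop i l)" by (rule seg_Fin)
  have d: "drop i l = take k (drop i l) @ drop (i+k) l" by (metis append_take_drop_id drop_drop add.commute)
  show ?thesis using Fin s d by simp
next
  case (Inf f)
  then show ?thesis by (auto simp: seg_def fun_eq_iff add.commute)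
qed

lemma sdrop_eq_sappend:
  assumes "enat i \<le> slen \<tau>" "sdrop i \<tau> = sappend z \<tau>'"
  shows "enat (i + length z) \<le> slen \<tau> \<and> z = seg \<tau> i (length z) \<and> \<tau>' = sdrop (i+length z) \<tau>"
proof (cases \<tau>)
  case (Fin l)
  with assms obtain l' where l': "\<tau>' = Fin l'" by (cases \<tau>') auto
  with assms Fin have e: "drop i l = z @ l'" by simp
  have "i \<le> length l" using assms(1) Fin by simp
  then have "length (drop i l) = length l - i" by simp
  then have le: "i + length z \<le> length l" using e \<open>i \<le> length l\<close> by simp
  moreover have "z = take (length z) (drop i l)" using e by simp
  moreover have "l' = drop (length z) (drop i l)" using e by simp
  then have "l' = drop (i + length z) l" by (simp add: add.commute)
  ultimately show ?thesis using Fin l' seg_Fin[OF le] by auto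
next
  case (Inf f)
  with assms obtain g where g: "\<tau>' = Inf g" by (cases \<tau>') auto
  have eq: "(\<lambda>n. f (n + i)) = (\<lambda>n. if n < length z then z ! n else g (n - length z))"
    using assms(2) Inf g by simp
  have e: "f (n + i) = (if n < length z then z ! n else g (n - length z))" for n
    using fun_cong[OF eq, of n] by simp
  have "z = seg \<tau> i (length z)" unfolding seg_def
  proof (rule nth_equalityI)
    fix k assume "k < length z"
    then show "z ! k = map (\<lambda>n. snth \<tau> (i + n)) [0..<length z] ! k"
      using Inf e[of k] by (simp add: add.commute)
  qed simp
  moreover have "g = (\<lambda>n. f (n + (i + length z)))"
  proof
    fix n show "g n = f (n + (i + length z))" using e[of "n + length z"] by (simp add: ac_simps)
  qed
  ultimately show ?thesis using Inf g by simp
qed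

lemma prefix_seg: "sprefix \<tau> i @ seg \<tau> i k = sprefix \<tau> (i+k)"
  unfolding sprefix_def seg_def
  by (rule nth_equalityI) (auto simp: nth_append)

lemma ttime_seg: "k > 0 \<Longrightarrow> ttime (seg \<tau> i k) = ttime (sprefix \<tau> (i+k))"
  unfolding ttime_def seg_def sprefix_def
  by (cases k) (auto simp: last_map)

lemma seg_split: "m \<le> k \<Longrightarrow> seg \<tau> i k = seg \<tau> i m @ seg \<tau> (i+m) (k-m)"
proof -
  assume "m \<le> k"
  then have "[0..<k] = [0..<m] @ [m..<k]" by (metis upt_add_eq_append zero_le le_add_diff_inverse)
  moreover have "[m..<k] = map (\<lambda>n. n + m) [0..<k-m]" using \<open>m \<le> k\<close> by (simp add: map_add_upt)
  ultimately show ?thesis unfolding seg_def by (simp add: ac_simps)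
qed

lemma corr_len: "slen (corr_word w \<tau>) = eSuc (slen \<tau>)"
  by (cases \<tau>) (auto simp: eSuc_enat)

lemma corr_nth: "enat j \<le> slen \<tau> \<Longrightarrow> snth (corr_word w \<tau>) j = corr_letter w \<tau> j"
  by (cases \<tau>) (auto simp del: upt_Suc)


lemma length_seg[simp]: "length (seg \<tau> i k) = k"
  by (simp add: seg_def)

lemma enat_less_eSuc: "enat j < eSuc x \<longleftrightarrow> enat j \<le> x"
  by (cases x) (auto simp: eSuc_enat)

lemma time_corr: "enat j \<le> slen \<tau> \<Longrightarrow> snd (snth (corr_word w \<tau>) j) = ttime (sprefix \<tau> j)"
  by (simp add: corr_nth corr_letter_def)

lemma main_gen:
  "enat i \<le> slen \<tau> \<Longrightarrow> esg_sat w (sprefix \<tau> i) (sdrop i \<tau>) \<phi> \<longleftrightarrow>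
         mtl_sat (corr_word w \<tau>) i (map_fml (\<lambda>F. (F, [])) \<phi> :: ('f \<times> 'n list) fml)"
proof (induction \<phi> arbitrary: i)
  case (Atom F)
  then show ?case by (simp add: corr_nth corr_letter_def)
next
  case (Neg \<phi>)
  then show ?case by simp
next
  case (And \<phi>1 \<phi>2)
  then show ?case by simp
next
  case (Until \<phi>1 I \<phi>2)
  note hi = Until.prems
  show ?case
  proof
    assume "esg_sat w (sprefix \<tau> i) (sdrop i \<tau>) (Until \<phi>1 I \<phi>2)"
    then obtain \<tau>' z1 where z1: "z1 \<noteq> []" "sdrop i \<tau> = sappend z1 \<tau>'"
      "esg_sat w (sprefix \<tau> i @ z1) \<tau>' \<phi>2" "in_ivl (ttime z1 - ttime (sprefix \<tau> i)) I"
      and all: "\<And>z2 z3. z1 = z2 @ z3 \<Longrightarrow> z2 \<noteq> [] \<Longrightarrow> z3 \<noteq> [] \<Longrightarrow>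
            esg_sat w (sprefix \<tau> i @ z2) (sappend z3 \<tau>') \<phi>1"
      by auto
    define k where "k = length z1"
    define j where "j = i + k"
    from sdrop_eq_sappend[OF hi z1(2)] have
      jle: "enat j \<le> slen \<tau>" and z1e: "z1 = seg \<tau> i k" and te: "\<tau>' = sdrop j \<tau>"
      by (auto simp: j_def k_def)
    have kpos: "k > 0" using z1(1) by (simp add: k_def)
    have pj: "sprefix \<tau> i @ z1 = sprefix \<tau> j" using z1e prefix_seg j_def by metis
    have "mtl_sat (corr_word w \<tau>) j (map_fml (\<lambda>F. (F, [])) \<phi>2)"
      using Until.IH(2)[OF jle] z1(3) pj te by simp
    moreover have "enat j < slen (corr_word w \<tau>)" using jle by (simp add: corr_len enat_less_eSuc)
    moreover have "in_ivl (snd (snth (corr_word w \<tau>) j) - snd (snth (corr_word w \<tau>) i)) I"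
    proof -
      have "snd (snth (corr_word w \<tau>) j) - snd (snth (corr_word w \<tau>) i) = ttime z1 - ttime (sprefix \<tau> i)"
        using time_corr[OF jle, of w] time_corr[OF hi, of w] ttime_seg[OF kpos, of \<tau> i] z1e j_def by simp
      then show ?thesis using z1(4) by simp
    qed
    moreover have "mtl_sat (corr_word w \<tau>) m (map_fml (\<lambda>F. (F, [])) \<phi>1)" if m: "i < m" "m < j" for m
    proof -
      have mle: "enat m \<le> slen \<tau>" using jle m by (meson enat_ord_simps(1) less_imp_le order_trans)
      have sp: "z1 = seg \<tau> i (m - i) @ seg \<tau> (i + (m - i)) (k - (m - i))"
        using z1e seg_split[of "m - i" k \<tau> i] m j_def by simp
      have im: "i + (m - i) = m" using m by simp
      have "sappend (seg \<tau> m (k - (m - i))) \<tau>' = sdrop m \<tau>"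
      proof -
        have mj: "m + (k - (m - i)) = j" using m j_def by simp
        show ?thesis using sdrop_split[of m "k - (m - i)" \<tau>, unfolded mj] te jle by simp
      qed
      moreover have "sprefix \<tau> i @ seg \<tau> i (m - i) = sprefix \<tau> m"
        using prefix_seg[of \<tau> i "m - i"] im by simp
      moreover have "seg \<tau> i (m - i) \<noteq> []" "seg \<tau> m (k - (m - i)) \<noteq> []"
        using m j_def by (auto simp flip: length_0_conv)
      ultimately have "esg_sat w (sprefix \<tau> m) (sdrop m \<tau>) \<phi>1"
        using all[OF sp[unfolded im]] by simp
      then show ?thesis using Until.IH(1)[OF mle] by simp
    qed
    moreover have "i < j" using j_def kpos by simp
    ultimately show "mtl_sat (corr_word w \<tau>) i (map_fml (\<lambda>F. (F, [])) (Until \<phi>1 I \<phi>2))"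
      unfolding fml.map mtl_sat.simps by blast
  next
    assume "mtl_sat (corr_word w \<tau>) i (map_fml (\<lambda>F. (F, [])) (Until \<phi>1 I \<phi>2))"
    then obtain j where j: "i < j" "enat j < slen (corr_word w \<tau>)"
      "mtl_sat (corr_word w \<tau>) j (map_fml (\<lambda>F. (F, [])) \<phi>2)"
      "in_ivl (snd (snth (corr_word w \<tau>) j) - snd (snth (corr_word w \<tau>) i)) I"
      and all: "\<And>m. i < m \<Longrightarrow> m < j \<Longrightarrow> mtl_sat (corr_word w \<tau>) m (map_fml (\<lambda>F. (F, [])) \<phi>1)"
      by auto
    have jle: "enat j \<le> slen \<tau>" using j(2) by (simp add: corr_len enat_less_eSuc)
    define k where "k = j - i"
    have kpos: "k > 0" and ij: "i + k = j" using j(1) by (auto simp: k_def)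
    define z1 where "z1 = seg \<tau> i k"
    have A: "z1 \<noteq> []" using kpos by (simp add: z1_def flip: length_0_conv)
    moreover have B: "sdrop i \<tau> = sappend z1 (sdrop j \<tau>)"
      using sdrop_split[of i k \<tau>] ij jle z1_def by simp
    moreover have pj: "sprefix \<tau> i @ z1 = sprefix \<tau> j" using prefix_seg ij z1_def by metis
    moreover have C: "esg_sat w (sprefix \<tau> i @ z1) (sdrop j \<tau>) \<phi>2"
      using Until.IH(2)[OF jle] j(3) pj by simp
    moreover have D: "in_ivl (ttime z1 - ttime (sprefix \<tau> i)) I"
    proof -
      have "snd (snth (corr_word w \<tau>) j) - snd (snth (corr_word w \<tau>) i) = ttime z1 - ttime (sprefix \<tau> i)"
        using time_corr[OF jle, of w] time_corr[OF hi, of w] ttime_seg[OF kpos, of \<tau> i] z1_def ij by simp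
      then show ?thesis using j(4) by simp
    qed
    moreover have E: "esg_sat w (sprefix \<tau> i @ z2) (sappend z3 (sdrop j \<tau>)) \<phi>1"
      if zz: "z1 = z2 @ z3" "z2 \<noteq> []" "z3 \<noteq> []" for z2 z3
    proof -
      define p where "p = length z2"
      have lz: "length z2 + length z3 = k" using zz(1) z1_def by (metis length_append length_seg)
      have "0 < length z2" "0 < length z3" using zz(2,3) by simp_all
      then have pk: "p < k" "0 < p" using lz p_def by linarith+
      have sp: "z1 = seg \<tau> i p @ seg \<tau> (i + p) (k - p)"
        using z1_def seg_split[of p k \<tau> i] pk by simp
      have e2: "z2 = seg \<tau> i p" and e3: "z3 = seg \<tau> (i + p) (k - p)"
        using zz(1) sp p_def by (metis append_eq_append_conv length_seg)+
      have mle: "enat (i + p) \<le> slen \<tau>" using jle pk ij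
        by (meson add_left_mono enat_ord_simps(1) less_imp_le order_trans)
      have "sappend z3 (sdrop j \<tau>) = sdrop (i + p) \<tau>"
      proof -
        have mj: "i + p + (k - p) = j" using pk ij by simp
        show ?thesis using sdrop_split[of "i + p" "k - p" \<tau>, unfolded mj] e3 jle by simp
      qed
      moreover have "sprefix \<tau> i @ z2 = sprefix \<tau> (i + p)" using prefix_seg e2 by metis
      moreover have "esg_sat w (sprefix \<tau> (i + p)) (sdrop (i + p) \<tau>) \<phi>1"
        using Until.IH(1)[OF mle] all[of "i + p"] pk ij by simp
      ultimately show ?thesis by simp
    qed
    show "esg_sat w (sprefix \<tau> i) (sdrop i \<tau>) (Until \<phi>1 I \<phi>2)"
      unfolding esg_sat.simps
      apply (rule exI[of _ "sdrop j \<tau>"])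
      apply (rule exI[of _ z1])
      using A B C D E by blast
  qed
qed

theorem mainTheorem9:
  fixes \<phi> :: "'f fml" and \<tau> :: "'a ttrace" and w :: "('f, 'n, 'a) world" and i :: nat
  assumes "valid_ttrace \<tau>"
    and "enat i \<le> slen \<tau>"
  shows "esg_sat w (sprefix \<tau> i) (sdrop i \<tau>) \<phi> \<longleftrightarrow>
         mtl_sat (corr_word w \<tau>) i (nullary \<phi> :: ('f \<times> 'n list) fml)"
  using main_gen[OF assms(2)] by (simp add: nullary_def)

end
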